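(* Let $k$ be a positive integer and let $G$ be a $2k$-connected $(P_2\cup kP_1)$-free graph. Let $u,v$ be distinct vertices of $G$, let $P$ be a longest $(u,v)$-path in $G$, oriented from $u$ to $v$, and suppose $V(P)\neq V(G)$. Let $x\in V(G)\setminus V(P)$ and write $N_P(x)=\{x_1,\dots,x_t\}$ in the order of appearance on $P$ from $u$ to $v$. Let $S_0$ be the set of vertices of $P$ preceding $x_1$, let $S_t$ be the set of vertices of $P$following $x_t$, and for $i\in\{1,\dots,t-1\}$ let $S_i$ be the set of vertices of $P$ strictly between $x_i$ and $x_{i+1}$. For $i\in\{1,\dots,t\}$ let $S_i'=\{x_i^{+j}: 1\le j\le |S_i|,\ j\text{ odd}\}$, let $S_0'=\{x_1^{-j}: 1\le j\le |S_0|,\ j\text{ odd}\}$, and let $S'=\bigcup_{i=0}^t S_i'$. Then $S'$ is an independent set in $G$, and no vertex of $V(G)\setminus V(P)$ has a neighbor in $S'$. Consequently $(V(G)\setminus V(P))\cup S'$ is an independent set.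
   Context: All graphs are finite and simple. For a graph $H$, a graph $G$ is $H$-free if $G$ contains no induced subgraph isomorphic to $H$; $P_2\cup kP_1$ is the disjoint union of an edge and $k$ isolated vertices. A $(u,v)$-path is a path with endpoints $u$ and $v$. $N_P(x)$ is the set of neighbors of $x$ lying on $P$. For a vertex $w$ of the oriented path $P$, $w^{+}$ (also $w^{+1}$) is its successor and $w^{-}$ (also $w^{-1}$) its predecessor on $P$, and $w^{+\ell}$, $w^{-\ell}$ denote the successor of $w^{+(\ell-1)}$, resp. predecessor of $w^{-(\ell-1)}$. *)

theory Defs
  imports Main
begin

definition simple_graph :: "'a set \<Rightarrow> ('a \<Rightarrow> 'a \<Rightarrow> bool) \<Rightarrow> bool" where
  "simple_graph V E \<longleftrightarrow> finite V \<and> (\<forall>a b. E a b \<longrightarrow> a \<in> V \<and> b \<in> V)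
     \<and> (\<forall>a b. E a b \<longrightarrow> E b a) \<and> (\<forall>a. \<not> E a a)"

definition is_path :: "'a set \<Rightarrow> ('a \<Rightarrow> 'a \<Rightarrow> bool) \<Rightarrow> 'a list \<Rightarrow> bool" where
  "is_path V E P \<longleftrightarrow> P \<noteq> [] \<and> distinct P \<and> set P \<subseteq> V
     \<and> (\<forall>i. Suc i < length P \<longrightarrow> E (P ! i) (P ! Suc i))"

definition uv_path :: "'a set \<Rightarrow> ('a \<Rightarrow> 'a \<Rightarrow> bool) \<Rightarrow> 'a \<Rightarrow> 'a \<Rightarrow> 'a list \<Rightarrow> bool" where
  "uv_path V E u v P \<longleftrightarrow> is_path V E P \<and> hd P = u \<and> last P = v"

definition longest_uv_path :: "'a set \<Rightarrow> ('a \<Rightarrow> 'a \<Rightarrow> bool) \<Rightarrow> 'a \<Rightarrow> 'a \<Rightarrow> 'a list \<Rightarrow> bool" where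
  "longest_uv_path V E u v P \<longleftrightarrow> uv_path V E u v P
     \<and> (\<forall>Q. uv_path V E u v Q \<longrightarrow> length Q \<le> length P)"

definition connected_graph :: "'a set \<Rightarrow> ('a \<Rightarrow> 'a \<Rightarrow> bool) \<Rightarrow> bool" where
  "connected_graph V E \<longleftrightarrow> (\<forall>a\<in>V. \<forall>b\<in>V. \<exists>P. uv_path V E a b P)"

definition del_adj :: "('a \<Rightarrow> 'a \<Rightarrow> bool) \<Rightarrow> 'a set \<Rightarrow> 'a \<Rightarrow> 'a \<Rightarrow> bool" where
  "del_adj E S = (\<lambda>a b. E a b \<and> a \<notin> S \<and> b \<notin> S)"

definition k_connected :: "'a set \<Rightarrow> ('a \<Rightarrow> 'a \<Rightarrow> bool) \<Rightarrow> nat \<Rightarrow> bool" where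
  "k_connected V E k \<longleftrightarrow> card V > k
     \<and> (\<forall>S. S \<subseteq> V \<longrightarrow> card S < k \<longrightarrow> connected_graph (V - S) (del_adj E S))"

definition has_induced :: "'b set \<Rightarrow> ('b \<Rightarrow> 'b \<Rightarrow> bool) \<Rightarrow> 'a set \<Rightarrow> ('a \<Rightarrow> 'a \<Rightarrow> bool) \<Rightarrow> bool" where
  "has_induced VH EH V E \<longleftrightarrow> (\<exists>f. inj_on f VH \<and> f ` VH \<subseteq> V
     \<and> (\<forall>a\<in>VH. \<forall>b\<in>VH. EH a b \<longleftrightarrow> E (f a) (f b)))"

definition H_free :: "'b set \<Rightarrow> ('b \<Rightarrow> 'b \<Rightarrow> bool) \<Rightarrow> 'a set \<Rightarrow> ('a \<Rightarrow> 'a \<Rightarrow> bool) \<Rightarrow> bool" where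
  "H_free VH EH V E \<longleftrightarrow> \<not> has_induced VH EH V E"

definition P2kP1_V :: "nat \<Rightarrow> nat set" where
  "P2kP1_V k = {0..k+1}"

definition P2kP1_E :: "nat \<Rightarrow> nat \<Rightarrow> bool" where
  "P2kP1_E a b \<longleftrightarrow> (a = 0 \<and> b = 1) \<or> (a = 1 \<and> b = 0)"

definition independent :: "'a set \<Rightarrow> ('a \<Rightarrow> 'a \<Rightarrow> bool) \<Rightarrow> 'a set \<Rightarrow> bool" where
  "independent V E S \<longleftrightarrow> S \<subseteq> V \<and> (\<forall>a\<in>S. \<forall>b\<in>S. \<not> E a b)"

text \<open>Positions on P (0-based) of the neighbours of x, increasing, i.e.
the vertices x_1,...,x_t are P ! (nbr_pos E P x ! (i-1)).\<close>

definition nbr_pos :: "('a \<Rightarrow> 'a \<Rightarrow> bool) \<Rightarrow> 'a list \<Rightarrow> 'a \<Rightarrow> nat list" where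
  "nbr_pos E P x = sorted_list_of_set {i. i < length P \<and> E x (P ! i)}"

definition xpos :: "('a \<Rightarrow> 'a \<Rightarrow> bool) \<Rightarrow> 'a list \<Rightarrow> 'a \<Rightarrow> nat \<Rightarrow> nat" where
  "xpos E P x i = nbr_pos E P x ! (i - 1)"

definition seg :: "('a \<Rightarrow> 'a \<Rightarrow> bool) \<Rightarrow> 'a list \<Rightarrow> 'a \<Rightarrow> nat \<Rightarrow> 'a set" where
  "seg E P x i =
     (let t = length (nbr_pos E P x) in
      if i = 0 then {P ! j | j. j < xpos E P x 1}
      else if i < t then {P ! j | j. xpos E P x i < j \<and> j < xpos E P x (i + 1)}
      else {P ! j | j. xpos E P x t < j \<and> j < length P})"

definition seg' :: "('a \<Rightarrow> 'a \<Rightarrow> bool) \<Rightarrow> 'a list \<Rightarrow> 'a \<Rightarrow> nat \<Rightarrow> 'a set" where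
  "seg' E P x i =
     (if i = 0 then {P ! (xpos E P x 1 - j) | j. 1 \<le> j \<and> j \<le> card (seg E P x 0) \<and> odd j}
      else {P ! (xpos E P x i + j) | j. 1 \<le> j \<and> j \<le> card (seg E P x i) \<and> odd j})"

text \<open>S' = union of S_0', ..., S_t' (empty when x has no neighbour on P,
where the construction is not defined).\<close>

definition Sprime :: "('a \<Rightarrow> 'a \<Rightarrow> bool) \<Rightarrow> 'a list \<Rightarrow> 'a \<Rightarrow> 'a set" where
  "Sprime E P x =
     (let t = length (nbr_pos E P x) in
      if t = 0 then {} else (\<Union>i\<in>{0..t}. seg' E P x i))"

end

theory Submission
  imports Defs
begin


definition sg :: "'a list \<Rightarrow> nat \<Rightarrow> nat \<Rightarrow> 'a list" where
  "sg P i j = take (j - i) (drop i P)"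

lemma sg_length[simp]: "j \<le> length P \<Longrightarrow> length (sg P i j) = j - i"
  by (simp add: sg_def)

lemma sg_nth[simp]: "i + m < j \<Longrightarrow> j \<le> length P \<Longrightarrow> sg P i j ! m = P ! (i + m)"
  by (simp add: sg_def)

lemma sg_set: "j \<le> length P \<Longrightarrow> set (sg P i j) = {P ! m | m. i \<le> m \<and> m < j}"
proof -
  assume j: "j \<le> length P"
  show ?thesis
  proof (intro set_eqI iffI)
    fix z assume "z \<in> set (sg P i j)"
    then obtain m where m: "m < length (sg P i j)" "sg P i j ! m = z" by (auto simp: in_set_conv_nth)
    then show "z \<in> {P ! m | m. i \<le> m \<and> m < j}" using j
      by (intro CollectI exI[of _ "i+m"]) auto
  next
    fix z assume "z \<in> {P ! m | m. i \<le> m \<and> m < j}"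
    then obtain m where m: "i \<le> m" "m < j" "z = P ! m" by auto
    have "sg P i j ! (m - i) = z" using m j by simp
    moreover have "m - i < length (sg P i j)" using m j by simp
    ultimately show "z \<in> set (sg P i j)" by (metis nth_mem)
  qed
qed

lemma sg_ne: "i < j \<Longrightarrow> j \<le> length P \<Longrightarrow> sg P i j \<noteq> []"
  by (metis sg_length zero_less_diff list.size(3) less_irrefl)

lemma sg_hd: "i < j \<Longrightarrow> j \<le> length P \<Longrightarrow> hd (sg P i j) = P ! i"
  using sg_nth[of i 0 j P] sg_ne[of i j P] by (simp add: hd_conv_nth)

lemma sg_last: "i < j \<Longrightarrow> j \<le> length P \<Longrightarrow> last (sg P i j) = P ! (j - 1)"
  using sg_nth[of i "j - 1 - i" j P] sg_ne[of i j P] by (simp add: last_conv_nth)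

lemma sg_disj: "distinct P \<Longrightarrow> j \<le> i' \<Longrightarrow> j' \<le> length P \<Longrightarrow> j \<le> length P \<Longrightarrow>
    set (sg P i j) \<inter> set (sg P i' j') = {}"
  by (auto simp: sg_set nth_eq_iff_index_eq)

lemma sg_sub: "j \<le> length P \<Longrightarrow> set (sg P i j) \<subseteq> set P"
  by (auto simp: sg_set)

lemma is_path_append:
  assumes "is_path V E xs" "is_path V E ys" "set xs \<inter> set ys = {}" "E (last xs) (hd ys)"
  shows "is_path V E (xs @ ys)"
  unfolding is_path_def
proof (intro conjI allI impI)
  show "xs @ ys \<noteq> []" using assms(1) by (simp add: is_path_def)
  show "distinct (xs @ ys)" using assms by (simp add: is_path_def)
  show "set (xs @ ys) \<subseteq> V" using assms by (simp add: is_path_def)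
  fix i assume i: "Suc i < length (xs @ ys)"
  have xs: "xs \<noteq> []" "\<forall>i. Suc i < length xs \<longrightarrow> E (xs ! i) (xs ! Suc i)"
    using assms(1) by (auto simp: is_path_def)
  have ys: "ys \<noteq> []" "\<forall>i. Suc i < length ys \<longrightarrow> E (ys ! i) (ys ! Suc i)"
    using assms(2) by (auto simp: is_path_def)
  consider "Suc i < length xs" | "Suc i = length xs" | "Suc i > length xs" by linarith
  then show "E ((xs @ ys) ! i) ((xs @ ys) ! Suc i)"
  proof cases
    case 1 then show ?thesis using xs by (simp add: nth_append)
  next
    case 2
    then have ii: "i = length xs - Suc 0" by simp
    show ?thesis using assms(4) xs ys 2 unfolding ii
      by (simp add: nth_append last_conv_nth hd_conv_nth)
  next
    case 3
    then have "Suc (i - length xs) < length ys" using i by simp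
    then show ?thesis using 3 ys by (simp add: nth_append Suc_diff_le)
  qed
qed

lemma is_path_rev:
  assumes "is_path V E xs" "\<forall>a b. E a b \<longrightarrow> E b a"
  shows "is_path V E (rev xs)"
  unfolding is_path_def
proof (intro conjI allI impI)
  show "rev xs \<noteq> []" "distinct (rev xs)" "set (rev xs) \<subseteq> V" using assms by (auto simp: is_path_def)
  fix i assume i: "Suc i < length (rev xs)"
  let ?n = "length xs"
  have "E (xs ! (?n - Suc (Suc i))) (xs ! Suc (?n - Suc (Suc i)))"
    using assms(1) i by (auto simp: is_path_def)
  moreover have "Suc (?n - Suc (Suc i)) = ?n - Suc i" using i by simp
  ultimately show "E (rev xs ! i) (rev xs ! Suc i)" using i assms(2)
    by (auto simp: rev_nth)
qed

lemma is_path_single: "a \<in> V \<Longrightarrow> is_path V E [a]"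
  by (simp add: is_path_def)

lemma is_path_sg: "is_path V E P \<Longrightarrow> i < j \<Longrightarrow> j \<le> length P \<Longrightarrow> is_path V E (sg P i j)"
  unfolding is_path_def
  apply (intro conjI allI impI)
  apply (simp add: sg_ne)
  apply (simp add: sg_def distinct_take distinct_drop)
  using sg_sub apply fastforce
  apply simp
  done



locale LP =
  fixes V :: "'a set" and E :: "'a \<Rightarrow> 'a \<Rightarrow> bool" and u v :: 'a and P :: "'a list"
  assumes sg_graph: "simple_graph V E"
    and lp: "longest_uv_path V E u v P"
begin

lemma symE: "E a b \<Longrightarrow> E b a" using sg_graph by (auto simp: simple_graph_def)
lemma irrE: "\<not> E a a" using sg_graph by (auto simp: simple_graph_def)
lemma EV: "E a b \<Longrightarrow> a \<in> V \<and> b \<in> V" using sg_graph by (auto simp: simple_graph_def)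
lemma finV: "finite V" using sg_graph by (auto simp: simple_graph_def)
lemma Ppath: "is_path V E P" using lp by (auto simp: longest_uv_path_def uv_path_def)
lemma Pne: "P \<noteq> []" using Ppath by (auto simp: is_path_def)
lemma Pdist: "distinct P" using Ppath by (auto simp: is_path_def)
lemma PV: "set P \<subseteq> V" using Ppath by (auto simp: is_path_def)
lemma PE: "Suc i < length P \<Longrightarrow> E (P ! i) (P ! Suc i)" using Ppath by (auto simp: is_path_def)
lemma hdP: "P ! 0 = u" using lp Pne by (auto simp: longest_uv_path_def uv_path_def hd_conv_nth)
lemma lastP: "P ! (length P - 1) = v" using lp Pne by (auto simp: longest_uv_path_def uv_path_def last_conv_nth)
lemma longest: "uv_path V E u v Q \<Longrightarrow> length Q \<le> length P"
  using lp by (auto simp: longest_uv_path_def)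
lemma Pnth_inj: "i < length P \<Longrightarrow> j < length P \<Longrightarrow> P ! i = P ! j \<longleftrightarrow> i = j"
  using Pdist by (simp add: nth_eq_iff_index_eq)

lemma frame:
  assumes a: "0 < a" "a \<le> b" "b < length P"
    and M: "is_path V E M" "set M \<inter> set (sg P 0 a) = {}" "set M \<inter> set (sg P b (length P)) = {}"
    and e1: "E (P ! (a - 1)) (hd M)" and e2: "E (last M) (P ! b)"
    and len: "length M + a + (length P - b) > length P"
  shows False
proof -
  let ?n = "length P"
  let ?Q = "sg P 0 a @ (M @ sg P b ?n)"
  have p2: "is_path V E (M @ sg P b ?n)"
    by (rule is_path_append) (use M e2 a is_path_sg[OF Ppath, of b ?n] sg_hd[of b ?n P] in auto)
  have Mne: "M \<noteq> []" using M by (auto simp: is_path_def)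
  have p1: "is_path V E ?Q"
    apply (rule is_path_append)
    using is_path_sg[OF Ppath, of 0 a] a apply simp
    apply (rule p2)
    using M sg_disj[OF Pdist, of a b ?n 0] a apply auto[1]
    using e1 Mne sg_last[of 0 a P] a by simp
  have "hd ?Q = u" using sg_hd[of 0 a P] a sg_ne[of 0 a P] hdP by simp
  moreover have "last ?Q = v" using sg_last[of b ?n P] a sg_ne[of b ?n P] lastP by simp
  ultimately have "uv_path V E u v ?Q" using p1 by (simp add: uv_path_def)
  then have "length ?Q \<le> ?n" by (rule longest)
  then show False using len a by simp
qed

lemma setsg_notP: "set Q \<inter> set P = {} \<Longrightarrow> j \<le> length P \<Longrightarrow> set Q \<inter> set (sg P i j) = {}"
  using sg_sub by blast

text \<open>X1: insertion of an off-path path between consecutive vertices.\<close>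
lemma X1:
  assumes "Suc i < length P" "is_path V E Q" "set Q \<inter> set P = {}"
    "E (P ! i) (hd Q)" "E (last Q) (P ! Suc i)"
  shows False
proof -
  have "Q \<noteq> []" using assms by (auto simp: is_path_def)
  then show False
    using assms setsg_notP[OF assms(3)]
    by (intro frame[of "Suc i" "Suc i" Q]) auto
qed

end


context LP begin

lemma rsg_path: "i < j \<Longrightarrow> j \<le> length P \<Longrightarrow> is_path V E (rev (sg P i j))"
  using is_path_rev[OF is_path_sg[OF Ppath]] symE by blast

lemma rsg_hd: "i < j \<Longrightarrow> j \<le> length P \<Longrightarrow> hd (rev (sg P i j)) = P ! (j - 1)"
  using sg_last sg_ne by (simp add: hd_rev)
lemma rsg_last: "i < j \<Longrightarrow> j \<le> length P \<Longrightarrow> last (rev (sg P i j)) = P ! i"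
  using sg_hd sg_ne by (simp add: last_rev)

lemma dj: "set (sg P i j) \<inter> set (sg P i' j') = {}"
  if "j \<le> i' \<or> j' \<le> i" "j' \<le> length P" "j \<le> length P" for i j i' j' :: nat
  using sg_disj[OF Pdist] that by (metis Int_commute)

lemma djQ: "set Q \<inter> set P = {} \<Longrightarrow> j \<le> length P \<Longrightarrow> set (sg P i j) \<inter> set Q = {}"
  using sg_sub by blast

lemma djx: "x \<notin> set P \<Longrightarrow> j \<le> length P \<Longrightarrow> x \<notin> set (sg P i j)"
  using sg_sub by blast

lemma X2a:
  assumes ij: "i < j" "Suc j < length P" and Q: "is_path V E Q" "set Q \<inter> set P = {}"
    and e: "E (P ! i) (hd Q)" "E (last Q) (P ! j)" "E (P ! Suc i) (P ! Suc j)"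
  shows False
proof -
  let ?R = "rev (sg P (Suc i) (Suc j))"
  have Qne: "Q \<noteq> []" using Q by (auto simp: is_path_def)
  have d0: "set (sg P (Suc i) (Suc j)) \<inter> set Q = {}" using djQ[OF Q(2)] ij by simp
  have M: "is_path V E (Q @ ?R)"
    apply (rule is_path_append[OF Q(1) rsg_path])
    using ij d0 e rsg_hd[of "Suc i" "Suc j"] by auto
  have d1: "set (Q @ ?R) \<inter> set (sg P 0 (Suc i)) = {}"
    using djQ[OF Q(2), of "Suc i" 0] dj[where i="Suc i" and j="Suc j" and i'="0" and j'="Suc i"] ij by auto
  have d2: "set (Q @ ?R) \<inter> set (sg P (Suc j) (length P)) = {}"
    using djQ[OF Q(2), of "length P" "Suc j"] dj[where i="Suc i" and j="Suc j" and i'="Suc j" and j'="length P"] ij by auto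
  have h: "hd (Q @ ?R) = hd Q" using Qne by simp
  have l: "last (Q @ ?R) = P ! Suc i" using rsg_last[of "Suc i" "Suc j"] sg_ne[of "Suc i" "Suc j" P] ij by simp
  show False
    by (rule frame[of "Suc i" "Suc j" "Q @ ?R"]) (use ij M d1 d2 h l e Qne in auto)
qed

lemma X2b:
  assumes ij: "i < j" "Suc j < length P" and xy: "x \<notin> set P" "y \<notin> set P" "x \<noteq> y" "x \<in> V" "y \<in> V"
    and e: "E (P ! i) x" "E x (P ! j)" "E (P ! Suc i) y" "E y (P ! Suc j)"
  shows False
proof -
  let ?R = "rev (sg P (Suc i) (Suc j))"
  let ?M = "[x] @ ?R @ [y]"
  have M1: "is_path V E (?R @ [y])"
    apply (rule is_path_append[OF rsg_path is_path_single])
    using ij xy djx[of y "Suc j" "Suc i"] e rsg_last[of "Suc i" "Suc j"] by (auto intro: symE)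
  have M: "is_path V E ?M"
    apply (rule is_path_append[OF is_path_single M1])
    using ij xy djx[of x "Suc j" "Suc i"] e rsg_hd[of "Suc i" "Suc j"] sg_ne[of "Suc i" "Suc j" P]
    by auto
  have d1: "set ?M \<inter> set (sg P 0 (Suc i)) = {}"
    using djx[OF xy(1), of "Suc i" 0] djx[OF xy(2), of "Suc i" 0] dj[where i="Suc i" and j="Suc j" and i'="0" and j'="Suc i"] ij by auto
  have d2: "set ?M \<inter> set (sg P (Suc j) (length P)) = {}"
    using djx[OF xy(1), of "length P" "Suc j"] djx[OF xy(2), of "length P" "Suc j"]
      dj[where i="Suc i" and j="Suc j" and i'="Suc j" and j'="length P"] ij by auto
  show False
    by (rule frame[of "Suc i" "Suc j" ?M]) (use ij M d1 d2 e in auto)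
qed

lemma X3:
  assumes o: "Suc p \<le> ia" "ia < ib" "Suc ib < length P" and x: "x \<notin> set P" "x \<in> V"
    and e: "E x (P ! ia)" "E x (P ! ib)" "E (P ! p) (P ! Suc ia)" "E (P ! Suc p) (P ! Suc ib)"
  shows False
proof -
  let ?A = "sg P (Suc ia) (Suc ib)" and ?R = "rev (sg P (Suc p) (Suc ia))"
  let ?M = "?A @ [x] @ ?R"
  have M2: "is_path V E ([x] @ ?R)"
    apply (rule is_path_append[OF is_path_single rsg_path])
    using o x djx[of x "Suc ia" "Suc p"] e rsg_hd[of "Suc p" "Suc ia"] by auto
  have M: "is_path V E ?M"
    apply (rule is_path_append[OF is_path_sg[OF Ppath] M2])
    using o djx[OF x(1), of "Suc ib" "Suc ia"] dj[where i="Suc ia" and j="Suc ib" and i'="Suc p" and j'="Suc ia"]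
      e sg_last[of "Suc ia" "Suc ib" P] by (auto intro: symE)
  have l: "last ?M = P ! Suc p"
    using rsg_last[of "Suc p" "Suc ia"] sg_ne[of "Suc p" "Suc ia" P] o by simp
  have h: "hd ?M = P ! Suc ia"
    using sg_hd[of "Suc ia" "Suc ib" P] sg_ne[of "Suc ia" "Suc ib" P] o by simp
  have d1: "set ?M \<inter> set (sg P 0 (Suc p)) = {}"
    using djx[OF x(1), of "Suc p" 0] dj[where i="Suc ia" and j="Suc ib" and i'="0" and j'="Suc p"]
      dj[where i="Suc p" and j="Suc ia" and i'="0" and j'="Suc p"] o by auto
  have d2: "set ?M \<inter> set (sg P (Suc ib) (length P)) = {}"
    using djx[OF x(1), of "length P" "Suc ib"] dj[where i="Suc ia" and j="Suc ib" and i'="Suc ib" and j'="length P"]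
      dj[where i="Suc p" and j="Suc ia" and i'="Suc ib" and j'="length P"] o by auto
  show False
    by (rule frame[of "Suc p" "Suc ib" ?M]) (use o M d1 d2 e h l in auto)
qed

lemma X4:
  assumes o: "ia < ib" "ib < p" "Suc p < length P" and x: "x \<notin> set P" "x \<in> V"
    and e: "E x (P ! ia)" "E x (P ! ib)" "E (P ! p) (P ! Suc ia)" "E (P ! Suc p) (P ! Suc ib)"
  shows False
proof -
  let ?R1 = "rev (sg P (Suc ia) (Suc ib))" and ?R2 = "rev (sg P (Suc ib) (Suc p))"
  let ?M = "[x] @ ?R1 @ ?R2"
  have M2: "is_path V E (?R1 @ ?R2)"
    apply (rule is_path_append[OF rsg_path rsg_path])
    using o dj[where i="Suc ia" and j="Suc ib" and i'="Suc ib" and j'="Suc p"]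
      e rsg_last[of "Suc ia" "Suc ib"] rsg_hd[of "Suc ib" "Suc p"] by (auto intro: symE)
  have M: "is_path V E ?M"
    apply (rule is_path_append[OF is_path_single M2])
    using o x djx[OF x(1), of "Suc ib" "Suc ia"] djx[OF x(1), of "Suc p" "Suc ib"]
      e rsg_hd[of "Suc ia" "Suc ib"] sg_ne[of "Suc ia" "Suc ib" P] by auto
  have l: "last ?M = P ! Suc ib"
    using rsg_last[of "Suc ib" "Suc p"] sg_ne[of "Suc ib" "Suc p" P] o by simp
  have d1: "set ?M \<inter> set (sg P 0 (Suc ia)) = {}"
    using djx[OF x(1), of "Suc ia" 0] dj[where i="Suc ia" and j="Suc ib" and i'="0" and j'="Suc ia"]
      dj[where i="Suc ib" and j="Suc p" and i'="0" and j'="Suc ia"] o by auto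
  have d2: "set ?M \<inter> set (sg P (Suc p) (length P)) = {}"
    using djx[OF x(1), of "length P" "Suc p"] dj[where i="Suc ia" and j="Suc ib" and i'="Suc p" and j'="length P"]
      dj[where i="Suc ib" and j="Suc p" and i'="Suc p" and j'="length P"] o by auto
  show False
    by (rule frame[of "Suc ia" "Suc p" ?M]) (use o M d1 d2 e l in \<open>auto intro: symE\<close>)
qed

lemma X5:
  assumes o: "ia < p" "Suc p \<le> ib" "Suc ib < length P" and x: "x \<notin> set P" "x \<in> V"
    and e: "E x (P ! ia)" "E x (P ! ib)" "E (P ! Suc p) (P ! Suc ia)" "E (P ! p) (P ! Suc ib)"
  shows False
proof -
  let ?R = "rev (sg P (Suc p) (Suc ib))" and ?F = "sg P (Suc ia) (Suc p)"
  let ?M = "[x] @ ?R @ ?F"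
  have M2: "is_path V E (?R @ ?F)"
    apply (rule is_path_append[OF rsg_path is_path_sg[OF Ppath]])
    using o dj[where i="Suc p" and j="Suc ib" and i'="Suc ia" and j'="Suc p"]
      e rsg_last[of "Suc p" "Suc ib"] sg_hd[of "Suc ia" "Suc p" P] by auto
  have M: "is_path V E ?M"
    apply (rule is_path_append[OF is_path_single M2])
    using o x djx[OF x(1), of "Suc ib" "Suc p"] djx[OF x(1), of "Suc p" "Suc ia"]
      e rsg_hd[of "Suc p" "Suc ib"] sg_ne[of "Suc p" "Suc ib" P] by auto
  have l: "last ?M = P ! p"
    using sg_last[of "Suc ia" "Suc p" P] sg_ne[of "Suc ia" "Suc p" P] o by simp
  have d1: "set ?M \<inter> set (sg P 0 (Suc ia)) = {}"
    using djx[OF x(1), of "Suc ia" 0] dj[where i="Suc p" and j="Suc ib" and i'="0" and j'="Suc ia"]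
      dj[where i="Suc ia" and j="Suc p" and i'="0" and j'="Suc ia"] o by auto
  have d2: "set ?M \<inter> set (sg P (Suc ib) (length P)) = {}"
    using djx[OF x(1), of "length P" "Suc ib"] dj[where i="Suc p" and j="Suc ib" and i'="Suc ib" and j'="length P"]
      dj[where i="Suc ia" and j="Suc p" and i'="Suc ib" and j'="length P"] o by auto
  show False
    by (rule frame[of "Suc ia" "Suc ib" ?M]) (use o M d1 d2 e l in \<open>auto intro: symE\<close>)
qed

end


lemma FREE:
  assumes g: "simple_graph V E" and hf: "H_free (P2kP1_V k) P2kP1_E V E"
    and ab: "E a b" and I: "finite I" "I \<subseteq> V" "card I \<ge> k" "a \<notin> I" "b \<notin> I"
    and na: "\<forall>z\<in>I. \<not> E a z \<and> \<not> E b z" and ind: "\<forall>z\<in>I. \<forall>z'\<in>I. \<not> E z z'"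
  shows False
proof -
  have symE: "\<And>a b. E a b \<Longrightarrow> E b a" and irr: "\<And>a. \<not> E a a" and EV: "\<And>a b. E a b \<Longrightarrow> a \<in> V \<and> b \<in> V"
    using g by (auto simp: simple_graph_def)
  obtain I' where I': "I' \<subseteq> I" "card I' = k" using obtain_subset_with_card_n[OF I(3)] by blast
  have fI': "finite I'" using I' I(1) finite_subset by blast
  obtain h where h: "bij_betw h {0..<k} I'" using ex_bij_betw_nat_finite[OF fI'] I' by auto
  define f where "f m = (if m = 0 then a else if m = 1 then b else h (m - 2))" for m
  have hI: "m \<in> {2..k+1} \<Longrightarrow> f m \<in> I'" for m
    using h unfolding f_def bij_betw_def by auto
  have ab': "a \<noteq> b" using ab irr by auto
  have inj: "inj_on f (P2kP1_V k)"
  proof (rule inj_onI)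
    fix m n assume m: "m \<in> P2kP1_V k" and n: "n \<in> P2kP1_V k" and e: "f m = f n"
    show "m = n"
    proof (cases "m \<le> 1 \<or> n \<le> 1")
      case True
      then show ?thesis using e ab' hI[of m] hI[of n] m n I' I(4,5)
        unfolding P2kP1_V_def by (auto simp: f_def split: if_splits)
    next
      case False
      then have "h (m - 2) = h (n - 2)" using e by (simp add: f_def)
      moreover have "m - 2 \<in> {0..<k}" "n - 2 \<in> {0..<k}" using m n False by (auto simp: P2kP1_V_def)
      ultimately have "m - 2 = n - 2" using h by (auto simp: bij_betw_def inj_on_def)
      then show ?thesis using False by linarith
    qed
  qed
  have img: "f ` P2kP1_V k \<subseteq> V"
  proof
    fix z assume "z \<in> f ` P2kP1_V k"
    then obtain m where m: "m \<in> P2kP1_V k" "z = f m" by auto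
    show "z \<in> V"
    proof (cases "m \<le> 1")
      case True then show ?thesis using m EV[OF ab] by (auto simp: f_def)
    next
      case False then show ?thesis using m hI[of m] I' I(2) by (auto simp: P2kP1_V_def)
    qed
  qed
  have edges: "\<forall>m\<in>P2kP1_V k. \<forall>n\<in>P2kP1_V k. P2kP1_E m n \<longleftrightarrow> E (f m) (f n)"
  proof (intro ballI)
    fix m n assume m: "m \<in> P2kP1_V k" and n: "n \<in> P2kP1_V k"
    have mI: "m \<ge> 2 \<Longrightarrow> f m \<in> I" using hI[of m] m I' by (auto simp: P2kP1_V_def)
    have nI: "n \<ge> 2 \<Longrightarrow> f n \<in> I" using hI[of n] n I' by (auto simp: P2kP1_V_def)
    consider "m = 0" | "m = 1" | "m \<ge> 2" by linarith
    then show "P2kP1_E m n \<longleftrightarrow> E (f m) (f n)"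
    proof cases
      case 1
      consider "n = 0" | "n = 1" | "n \<ge> 2" by linarith
      then show ?thesis
        by cases (use 1 nI na ab irr in \<open>auto simp: P2kP1_E_def f_def\<close>)
    next
      case 2
      consider "n = 0" | "n = 1" | "n \<ge> 2" by linarith
      then show ?thesis
        by cases (use 2 nI na ab irr symE in \<open>auto simp: P2kP1_E_def f_def\<close>)
    next
      case 3
      have fm: "f m \<in> I" using mI 3 .
      consider "n = 0" | "n = 1" | "n \<ge> 2" by linarith
      then show ?thesis
      proof cases
        case 1 then show ?thesis using 3 fm na symE by (auto simp: P2kP1_E_def f_def)
      next
        case 2 then show ?thesis using 3 fm na symE by (auto simp: P2kP1_E_def f_def)
      next
        case n3: 3 then show ?thesis using 3 fm nI ind by (auto simp: P2kP1_E_def)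
      qed
    qed
  qed
  have "has_induced (P2kP1_V k) P2kP1_E V E"
    unfolding has_induced_def using inj img edges by blast
  then show False using hf by (simp add: H_free_def)
qed



lemma is_path_take:
  assumes "is_path V E Q" "i < length Q"
  shows "is_path V E (take (Suc i) Q)"
  using assms unfolding is_path_def
  by (auto simp: distinct_take dest: in_set_takeD)

lemma rtrancl_path:
  assumes "R\<^sup>*\<^sup>* a b" "a \<in> H" "\<forall>a b. R a b \<longrightarrow> E a b \<and> a \<in> H \<and> b \<in> H" "H \<subseteq> V"
  shows "\<exists>Q. is_path V E Q \<and> hd Q = a \<and> last Q = b \<and> set Q \<subseteq> H"
  using assms(1)
proof (induction rule: rtranclp_induct)
  case base
  then show ?case using assms by (intro exI[of _ "[a]"]) (auto simp: is_path_def)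
next
  case (step b c)
  then obtain Q where Q: "is_path V E Q" "hd Q = a" "last Q = b" "set Q \<subseteq> H" by blast
  have Qne: "Q \<noteq> []" using Q by (auto simp: is_path_def)
  show ?case
  proof (cases "c \<in> set Q")
    case True
    then obtain i where i: "i < length Q" "Q ! i = c" by (auto simp: in_set_conv_nth)
    have "is_path V E (take (Suc i) Q)" using is_path_take[OF Q(1) i(1)] .
    moreover have "hd (take (Suc i) Q) = a" using Q Qne by (simp add: hd_conv_nth)
    moreover have "last (take (Suc i) Q) = c" using i by (simp add: take_Suc_conv_app_nth)
    moreover have "set (take (Suc i) Q) \<subseteq> H" using Q(4) by (meson order_trans set_take_subset)
    ultimately show ?thesis by blast
  next
    case False
    have "is_path V E (Q @ [c])"
      by (rule is_path_append[OF Q(1)]) (use step assms False Q in \<open>auto simp: is_path_def\<close>)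
    then show ?thesis using Q Qne step assms by (intro exI[of _ "Q @ [c]"]) auto
  qed
qed

lemma rtranclp_sym: assumes "\<And>a b. R a b \<Longrightarrow> R b a" "R\<^sup>*\<^sup>* a b" shows "R\<^sup>*\<^sup>* b a"
  using assms(2)
proof (induction rule: rtranclp_induct)
  case base then show ?case by simp
next
  case (step b c)
  then show ?case using assms(1) by (meson converse_rtranclp_into_rtranclp)
qed

locale MAIN = LP +
  fixes k :: nat and x :: 'a
  assumes k1: "k \<ge> 1" and kc: "k_connected V E (2 * k)"
    and hf: "H_free (P2kP1_V k) P2kP1_E V E" and uv: "u \<noteq> v" and xH: "x \<in> V - set P"
begin

abbreviation "HH \<equiv> V - set P"

lemma n2: "length P \<ge> 2"
proof (rule ccontr)
  assume "\<not> length P \<ge> 2"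
  moreover have "length P > 0" using Pne by simp
  ultimately have "length P = 1" by linarith
  then show False using hdP lastP uv by simp
qed

lemma free: "E a b \<Longrightarrow> finite I \<Longrightarrow> I \<subseteq> V \<Longrightarrow> card I \<ge> k \<Longrightarrow> a \<notin> I \<Longrightarrow> b \<notin> I \<Longrightarrow>
  \<forall>z\<in>I. \<not> E a z \<and> \<not> E b z \<Longrightarrow> \<forall>z\<in>I. \<forall>z'\<in>I. \<not> E z z' \<Longrightarrow> False"
  using FREE[OF sg_graph hf] by blast

lemma conn: "S \<subseteq> V \<Longrightarrow> card S < 2 * k \<Longrightarrow> a \<in> V - S \<Longrightarrow> b \<in> V - S \<Longrightarrow>
   \<exists>Q. uv_path (V - S) (del_adj E S) a b Q"
  using kc by (auto simp: k_connected_def connected_graph_def)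

text \<open>Step 1: x has no neighbour off P.\<close>

definition RR where "RR a b \<longleftrightarrow> E a b \<and> a \<in> HH \<and> b \<in> HH"
definition CC where "CC = {c. RR\<^sup>*\<^sup>* x c}"

lemma CC_H: "c \<in> CC \<Longrightarrow> c \<in> HH"
proof -
  assume "c \<in> CC"
  then have "RR\<^sup>*\<^sup>* x c" by (simp add: CC_def)
  then show "c \<in> HH"
    by (induction rule: rtranclp_induct) (use xH in \<open>auto simp: RR_def\<close>)
qed

lemma CC_x: "x \<in> CC" by (simp add: CC_def)

lemma CC_step: "c \<in> CC \<Longrightarrow> c' \<in> HH \<Longrightarrow> E c c' \<Longrightarrow> c' \<in> CC"
  using CC_H by (auto simp: CC_def RR_def intro: rtranclp.rtrancl_into_rtrancl)

lemma CC_path: "c1 \<in> CC \<Longrightarrow> c2 \<in> CC \<Longrightarrow> \<exists>Q. is_path V E Q \<and> hd Q = c1 \<and> last Q = c2 \<and> set Q \<subseteq> HH"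
proof -
  assume c: "c1 \<in> CC" "c2 \<in> CC"
  have "RR\<^sup>*\<^sup>* c1 x" using c(1) rtranclp_sym[of RR x c1] symE by (auto simp: CC_def RR_def)
  then have "RR\<^sup>*\<^sup>* c1 c2" using c(2) by (auto simp: CC_def)
  then show ?thesis
    by (rule rtrancl_path) (use c CC_H in \<open>auto simp: RR_def\<close>)
qed

definition DD where "DD = {i. i < length P \<and> (\<exists>c\<in>CC. E c (P ! i))}"
definition DP where "DP = (\<lambda>i. P ! Suc i) ` {i \<in> DD. Suc i < length P}"

lemma DP_noadj: "i \<in> DD \<Longrightarrow> Suc i < length P \<Longrightarrow> c \<in> CC \<Longrightarrow> \<not> E c (P ! Suc i)"
proof
  assume i: "i \<in> DD" "Suc i < length P" and c: "c \<in> CC" and e: "E c (P ! Suc i)"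
  obtain c0 where c0: "c0 \<in> CC" "E c0 (P ! i)" using i by (auto simp: DD_def)
  obtain Q where Q: "is_path V E Q" "hd Q = c0" "last Q = c" "set Q \<subseteq> HH" using CC_path[OF c0(1) c] by blast
  show False
    by (rule X1[OF i(2) Q(1)]) (use Q c0 e symE in auto)
qed

lemma DP_ind: "i \<in> DD \<Longrightarrow> j \<in> DD \<Longrightarrow> Suc i < length P \<Longrightarrow> Suc j < length P \<Longrightarrow> \<not> E (P ! Suc i) (P ! Suc j)"
proof (induction i j rule: linorder_wlog)
  case (le i j)
  show ?case
  proof (cases "i = j")
    case True then show ?thesis using irrE by simp
  next
    case False
    then have ij: "i < j" using le by simp
    show ?thesis
    proof
      assume e: "E (P ! Suc i) (P ! Suc j)"
      obtain c1 where c1: "c1 \<in> CC" "E c1 (P ! i)" using le by (auto simp: DD_def)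
      obtain c2 where c2: "c2 \<in> CC" "E c2 (P ! j)" using le by (auto simp: DD_def)
      obtain Q where Q: "is_path V E Q" "hd Q = c1" "last Q = c2" "set Q \<subseteq> HH" using CC_path[OF c1(1) c2(1)] by blast
      show False
        by (rule X2a[OF ij le(5) Q(1)]) (use Q c1 c2 e symE in auto)
    qed
  qed
next
  case (sym i j) then show ?case using symE by blast
qed

lemma x_noH: "y \<in> HH \<Longrightarrow> \<not> E x y"
proof
  assume y: "y \<in> HH" and xy: "E x y"
  have yC: "y \<in> CC" using CC_step[OF CC_x y xy] .
  have finDD: "finite DD" by (rule finite_subset[of _ "{..<length P}"]) (auto simp: DD_def)
  have finDP: "finite DP" using finDD by (simp add: DP_def)
  have DPP: "DP \<subseteq> set P" by (auto simp: DP_def)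
  have cardDP: "card DP < k"
  proof (rule ccontr)
    assume "\<not> card DP < k"
    then have ck: "card DP \<ge> k" by simp
    have na: "\<forall>z\<in>DP. \<not> E x z \<and> \<not> E y z"
      using DP_noadj[OF _ _ CC_x] DP_noadj[OF _ _ yC] by (auto simp: DP_def)
    have ind: "\<forall>z\<in>DP. \<forall>z'\<in>DP. \<not> E z z'"
      using DP_ind by (auto simp: DP_def)
    show False
      by (rule free[OF xy finDP _ ck _ _ na ind]) (use DPP PV xH y in auto)
  qed
  have cD: "card DD \<le> k"
  proof -
    have "DD \<subseteq> insert (length P - 1) {i \<in> DD. Suc i < length P}" by (auto simp: DD_def)
    then have "card DD \<le> card (insert (length P - 1) {i \<in> DD. Suc i < length P})"
      by (rule card_mono[rotated]) (use finDD in simp)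
    also have "\<dots> \<le> Suc (card {i \<in> DD. Suc i < length P})" by (simp add: card_insert_le_m1)
    also have "card {i \<in> DD. Suc i < length P} = card DP"
      unfolding DP_def
      by (rule card_image[symmetric]) (auto simp: inj_on_def Pnth_inj)
    finally show ?thesis using cardDP by simp
  qed
  define S where "S = (\<lambda>i. P ! i) ` DD"
  have SV: "S \<subseteq> V" using PV by (auto simp: S_def DD_def)
  have cS: "card S < 2 * k" using card_image_le[of DD "\<lambda>i. P ! i"] cD k1 by (simp add: S_def DD_def)
  obtain i where i: "i < length P" "i \<notin> DD"
  proof (rule ccontr)
    assume "\<not> thesis"
    then have all: "\<forall>i < length P. i \<in> DD" using that by blast
    have "0 < length P" "1 < length P" using n2 by auto
    then have "0 \<in> DD" "1 \<in> DD" using all by blast+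
    then obtain c where "c \<in> CC" "E c (P ! 1)" by (auto simp: DD_def)
    then show False using DP_noadj[of 0 c] \<open>0 \<in> DD\<close> n2 by simp
  qed
  have wS: "P ! i \<notin> S" using i by (auto simp: S_def DD_def Pnth_inj)
  have xS: "x \<notin> S" using xH by (auto simp: S_def DD_def)
  have xVS: "x \<in> V - S" using xH xS by auto
  have wVS: "P ! i \<in> V - S" using i PV wS by auto
  obtain Q where Q: "uv_path (V - S) (del_adj E S) x (P ! i) Q"
    using conn[OF SV cS xVS wVS] by blast
  have Qp: "Q \<noteq> []" "set Q \<subseteq> V - S" "\<forall>j. Suc j < length Q \<longrightarrow> del_adj E S (Q ! j) (Q ! Suc j)"
    "hd Q = x" "last Q = P ! i"
    using Q by (auto simp: uv_path_def is_path_def)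
  have allC: "j < length Q \<Longrightarrow> Q ! j \<in> CC" for j
  proof (induction j)
    case 0 then show ?case using Qp CC_x by (simp add: hd_conv_nth)
  next
    case (Suc j)
    have qj: "Q ! j \<in> CC" using Suc by simp
    have e: "E (Q ! j) (Q ! Suc j)" using Qp(3) Suc by (simp add: del_adj_def)
    have q: "Q ! Suc j \<in> V - S" using Qp(2) Suc by (meson nth_mem subsetD)
    show ?case
    proof (cases "Q ! Suc j \<in> set P")
      case True
      then obtain m where m: "m < length P" "P ! m = Q ! Suc j" by (auto simp: in_set_conv_nth)
      then have "m \<in> DD" using qj e by (auto simp: DD_def)
      then have "Q ! Suc j \<in> S" unfolding S_def using m(2) by (metis image_eqI)
      then show ?thesis using q by simp
    next
      case False
      then show ?thesis using CC_step[OF qj _ e] q by simp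
    qed
  qed
  have "last Q \<in> CC" using allC[of "length Q - 1"] Qp(1) by (simp add: last_conv_nth)
  then have "P ! i \<in> HH" using CC_H Qp(5) by simp
  then show False using i(1) by simp
qed

end


context MAIN begin

definition "Pos = {i. i < length P \<and> E x (P ! i)}"
definition "J = {i \<in> Pos. Suc i < length P}"
definition "Xp = (\<lambda>i. P ! Suc i) ` J"
definition "T = insert x Xp"
definition "F = {z \<in> V. z \<notin> T \<and> (\<forall>t\<in>T. \<not> E z t)}"
definition "AA z = {i \<in> J. E z (P ! Suc i)}"

lemma finPos: "finite Pos" by (rule finite_subset[of _ "{..<length P}"]) (auto simp: Pos_def)
lemma finJ: "finite J" using finPos by (simp add: J_def)
lemma finT: "finite T" using finJ by (simp add: T_def Xp_def)
lemma JPos: "J \<subseteq> Pos" by (auto simp: J_def)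
lemma xnP: "x \<notin> set P" using xH by simp
lemma xV: "x \<in> V" using xH by simp

lemma deg: "card Pos \<ge> 2 * k"
proof (rule ccontr)
  assume "\<not> card Pos \<ge> 2 * k"
  then have cP: "card Pos < 2 * k" by simp
  define S where "S = (\<lambda>i. P ! i) ` Pos"
  have SV: "S \<subseteq> V" using PV by (auto simp: S_def Pos_def)
  have cS: "card S < 2 * k" using card_image_le[OF finPos, of "\<lambda>i. P ! i"] cP by (simp add: S_def)
  have cV: "card V > 2 * k" using kc by (simp add: k_connected_def)
  have "\<not> V \<subseteq> insert x S"
  proof
    assume "V \<subseteq> insert x S"
    then have "card V \<le> card (insert x S)" by (rule card_mono[rotated]) (simp add: S_def finPos)
    also have "\<dots> \<le> Suc (card S)" by (simp add: card_insert_le_m1)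
    finally show False using cS cV by simp
  qed
  then obtain w where w: "w \<in> V" "w \<noteq> x" "w \<notin> S" by auto
  have xS: "x \<notin> S" using xnP by (auto simp: S_def Pos_def)
  have xVS: "x \<in> V - S" using xV xS by simp
  have wVS: "w \<in> V - S" using w by simp
  obtain Q where Q: "uv_path (V - S) (del_adj E S) x w Q" using conn[OF SV cS xVS wVS] by blast
  have Qp: "Q \<noteq> []" "set Q \<subseteq> V - S" "\<forall>j. Suc j < length Q \<longrightarrow> del_adj E S (Q ! j) (Q ! Suc j)"
    "hd Q = x" "last Q = w"
    using Q by (auto simp: uv_path_def is_path_def)
  have l2: "Suc 0 < length Q"
  proof (rule ccontr)
    assume "\<not> Suc 0 < length Q"
    then have "length Q = 1" using Qp(1) by (cases Q) auto
    then have "hd Q = last Q" using Qp(1) by (simp add: hd_conv_nth last_conv_nth)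
    then show False using Qp w by simp
  qed
  have e: "E x (Q ! 1)" using Qp(3) l2 Qp(4) Qp(1) by (auto simp: del_adj_def hd_conv_nth)
  have q1: "Q ! 1 \<in> set Q" using l2 by (metis One_nat_def nth_mem)
  have q: "Q ! 1 \<in> V - S" using q1 Qp(2) by blast
  show False
  proof (cases "Q ! 1 \<in> set P")
    case True
    then obtain m where m: "m < length P" "P ! m = Q ! 1" by (auto simp: in_set_conv_nth)
    then have "m \<in> Pos" using e by (auto simp: Pos_def)
    then have "Q ! 1 \<in> S" unfolding S_def using m(2) by (metis image_eqI)
    then show False using q by simp
  next
    case False
    then show False using x_noH[of "Q ! 1"] q e by simp
  qed
qed

lemma cardJ: "card J + 1 \<ge> 2 * k"
proof -
  have "Pos \<subseteq> insert (length P - 1) J" by (auto simp: Pos_def J_def)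
  then have "card Pos \<le> card (insert (length P - 1) J)" by (rule card_mono[rotated]) (simp add: finJ)
  also have "\<dots> \<le> Suc (card J)" by (simp add: card_insert_le_m1)
  finally show ?thesis using deg by simp
qed

lemma injXp: "inj_on (\<lambda>i. P ! Suc i) J" by (auto simp: inj_on_def J_def Pnth_inj)

lemma cardXp: "card Xp = card J" unfolding Xp_def by (rule card_image[OF injXp])

lemma xXp: "x \<notin> Xp" using xnP by (auto simp: Xp_def J_def)

lemma TV: "T \<subseteq> V" using xV PV by (auto simp: T_def Xp_def J_def)

lemma cardT: "card T \<ge> k"
proof -
  have "card T = Suc (card Xp)" using xXp finJ by (simp add: T_def Xp_def)
  then show ?thesis using cardXp cardJ by simp
qed

lemma PosE: "i \<in> Pos \<Longrightarrow> E x (P ! i)" by (simp add: Pos_def)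

lemma x_Xp: "i \<in> J \<Longrightarrow> \<not> E x (P ! Suc i)"
proof
  assume i: "i \<in> J" and e: "E x (P ! Suc i)"
  show False
    by (rule X1[of i "[x]"]) (use i e xnP xV PosE[of i] symE in \<open>auto simp: J_def is_path_def\<close>)
qed

lemma Xp_Xp: "i \<in> J \<Longrightarrow> j \<in> J \<Longrightarrow> \<not> E (P ! Suc i) (P ! Suc j)"
proof (induction i j rule: linorder_wlog)
  case (le i j)
  show ?case
  proof (cases "i = j")
    case True then show ?thesis using irrE by simp
  next
    case False
    then have ij: "i < j" using le by simp
    show ?thesis
    proof
      assume e: "E (P ! Suc i) (P ! Suc j)"
      show False
        by (rule X2a[OF ij _ _ _ _ _ e, of "[x]"])
           (use le xnP xV PosE[of i] PosE[of j] symE in \<open>auto simp: J_def is_path_def\<close>)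
    qed
  qed
next
  case (sym i j) then show ?case using symE by blast
qed

lemma T_ind: "a \<in> T \<Longrightarrow> b \<in> T \<Longrightarrow> \<not> E a b"
  using x_Xp Xp_Xp irrE symE unfolding T_def Xp_def by blast

lemma dicho: "z \<in> V \<Longrightarrow> z \<notin> T \<Longrightarrow> t \<in> T \<Longrightarrow> E z t \<Longrightarrow> card {t' \<in> T. \<not> E z t'} < k"
proof (rule ccontr)
  assume z: "z \<in> V" "z \<notin> T" "t \<in> T" "E z t" and c: "\<not> card {t' \<in> T. \<not> E z t'} < k"
  show False
    by (rule free[OF z(4), of "{t' \<in> T. \<not> E z t'}"]) (use c finT TV z T_ind in auto)
qed

lemma hubmiss:
  assumes z: "z \<in> V" "z \<notin> T" "t \<in> T" "E z t"
  shows "card (J - AA z) + (if E z x then 0 else 1) < k"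
proof -
  let ?M = "(\<lambda>i. P ! Suc i) ` (J - AA z)"
  have cM: "card ?M = card (J - AA z)"
    by (rule card_image) (rule inj_on_subset[OF injXp], auto)
  have sub: "?M \<union> (if E z x then {} else {x}) \<subseteq> {t' \<in> T. \<not> E z t'}"
    by (auto simp: T_def Xp_def AA_def)
  have "card (?M \<union> (if E z x then {} else {x})) = card (J - AA z) + (if E z x then 0 else 1)"
  proof (cases "E z x")
    case True then show ?thesis using cM by simp
  next
    case False
    have "x \<notin> ?M"
    proof
      assume "x \<in> ?M"
      then obtain i where i: "i \<in> J" "P ! Suc i = x" by auto
      from i(1) have "Suc i < length P" by (simp add: J_def)
      then show False using i xnP nth_mem[of "Suc i" P] by simp
    qed
    then show ?thesis using False cM finJ by simp
  qed
  moreover have "card (?M \<union> (if E z x then {} else {x})) \<le> card {t' \<in> T. \<not> E z t'}"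
    by (rule card_mono[OF _ sub]) (simp add: finT)
  ultimately show ?thesis using dicho[OF z] by simp
qed

lemma two_elems: "finite A \<Longrightarrow> card A \<ge> 2 \<Longrightarrow> \<exists>a b. a \<in> A \<and> b \<in> A \<and> (a::nat) < b"
proof -
  assume A: "finite A" "card A \<ge> 2"
  then have ne: "A \<noteq> {}" by auto
  let ?a = "Min A"
  have "card (A - {?a}) \<ge> 1" using A Min_in[OF A(1) ne] by simp
  then obtain b where "b \<in> A - {?a}" by (metis card.empty ex_in_conv not_one_le_zero)
  then have "b \<in> A" "b \<noteq> ?a" by auto
  moreover have "?a \<le> b" using Min_le[OF A(1) \<open>b \<in> A\<close>] .
  ultimately have "?a < b" by simp
  then show ?thesis using Min_in[OF A(1) ne] \<open>b \<in> A\<close> by blast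
qed

lemma H_F: "y \<in> HH \<Longrightarrow> y \<noteq> x \<Longrightarrow> y \<in> F"
proof -
  assume y: "y \<in> HH" "y \<noteq> x"
  have yT: "y \<notin> T" using y by (auto simp: T_def Xp_def J_def)
  have yx: "\<not> E y x" using x_noH[OF y(1)] symE by blast
  have "\<forall>t\<in>T. \<not> E y t"
  proof
    fix t assume t: "t \<in> T"
    show "\<not> E y t"
    proof
      assume e: "E y t"
      have hm: "card (J - AA y) + 1 < k" using hubmiss[of y t] y yT t e yx by simp
      have AJ: "AA y \<subseteq> J" by (auto simp: AA_def)
      have "card (J - AA y) = card J - card (AA y)"
        using card_Diff_subset[OF finite_subset[OF AJ finJ] AJ] .
      moreover have "card (AA y) \<le> card J" using card_mono[OF finJ AJ] .
      ultimately have "card J = card (J - AA y) + card (AA y)" by simp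
      then have "card (AA y) \<ge> 2" using hm cardJ by simp
      moreover have "finite (AA y)" using finJ by (simp add: AA_def)
      ultimately obtain i j where ij: "i \<in> AA y" "j \<in> AA y" "i < j" using two_elems by blast
      show False
        by (rule X2b[OF ij(3), of x y])
           (use ij y xnP xV PosE[of i] PosE[of j] symE in \<open>auto simp: AA_def J_def\<close>)
    qed
  qed
  then show "y \<in> F" using y yT by (simp add: F_def)
qed

lemma TF_V: "z \<in> T \<union> F \<Longrightarrow> z \<in> V" using TV by (auto simp: F_def)

lemma TF_ind: "a \<in> T \<union> F \<Longrightarrow> b \<in> T \<union> F \<Longrightarrow> \<not> E a b"
proof
  assume a: "a \<in> T \<union> F" and b: "b \<in> T \<union> F" and e: "E a b"
  consider "a \<in> T" "b \<in> T" | "a \<in> T" "b \<in> F" | "a \<in> F" "b \<in> T" | "a \<in> F" "b \<in> F"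
    using a b by blast
  then show False
  proof cases
    case 1 then show ?thesis using T_ind e by blast
  next
    case 2 then show ?thesis using e symE by (auto simp: F_def)
  next
    case 3 then show ?thesis using e by (auto simp: F_def)
  next
    case 4
    show ?thesis
      by (rule free[OF e finT TV cardT]) (use 4 T_ind symE in \<open>auto simp: F_def\<close>)
  qed
qed

end


lemma COMB:
  fixes J A B :: "nat set" and p k :: nat
  assumes J: "finite J" "p \<notin> J" and AB: "A \<subseteq> J" "B \<subseteq> J"
    and cA: "card (J - A) + 2 \<le> k" and cB: "card (J - B) + 1 \<le> k" and cJ: "2 * k \<le> card J + 1"
  shows "(\<exists>a b. a < b \<and> p < a \<and> a \<in> A \<and> b \<in> B) \<or> (\<exists>a b. a < b \<and> b < p \<and> a \<in> A \<and> b \<in> B)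
     \<or> (\<exists>a b. a < p \<and> p < b \<and> a \<in> B \<and> b \<in> A)"
proof (rule ccontr)
  assume N: "\<not> ?thesis"
  have N1: "\<And>a b. a < b \<Longrightarrow> p < a \<Longrightarrow> a \<in> A \<Longrightarrow> b \<notin> B" using N by blast
  have N2: "\<And>a b. a < b \<Longrightarrow> b < p \<Longrightarrow> a \<in> A \<Longrightarrow> b \<notin> B" using N by blast
  have N3: "\<And>a b. a < p \<Longrightarrow> p < b \<Longrightarrow> a \<in> B \<Longrightarrow> b \<notin> A" using N by blast
  have finA: "finite A" using finite_subset[OF AB(1) J(1)] .
  have Ane: "A \<noteq> {}"
  proof
    assume "A = {}"
    then show False using cA cJ by simp
  qed
  define m where "m = Min A"
  have mA: "m \<in> A" using Min_in[OF finA Ane] by (simp add: m_def)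
  have mle: "\<And>a. a \<in> A \<Longrightarrow> m \<le> a" using Min_le[OF finA] by (simp add: m_def)
  have mp: "m \<noteq> p" using mA AB J by auto
  have "\<exists>m0. J \<subseteq> (J - A) \<union> (J - B) \<union> {m0}"
  proof (cases "p < m")
    case True
    have "J \<subseteq> (J - A) \<union> (J - B) \<union> {m}"
    proof
      fix j assume j: "j \<in> J"
      consider "j < m" | "j = m" | "m < j" by linarith
      then show "j \<in> (J - A) \<union> (J - B) \<union> {m}"
      proof cases
        case 1 then show ?thesis using j mle by force
      next
        case 2 then show ?thesis by simp
      next
        case 3 then show ?thesis using j N1[OF 3 True mA] by simp
      qed
    qed
    then show ?thesis by blast
  next
    case False
    then have mlp: "m < p" using mp by simp
    show ?thesis
    proof (cases "\<exists>a\<in>A. p < a")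
      case True
      define A' where "A' = {a \<in> A. p < a}"
      have finA': "finite A'" using finA by (simp add: A'_def)
      have A'ne: "A' \<noteq> {}" using True by (auto simp: A'_def)
      define m' where "m' = Min A'"
      have m'A: "m' \<in> A" "p < m'" using Min_in[OF finA' A'ne] by (auto simp: m'_def A'_def)
      have m'le: "\<And>a. a \<in> A \<Longrightarrow> p < a \<Longrightarrow> m' \<le> a" using Min_le[OF finA'] by (simp add: m'_def A'_def)
      have "J \<subseteq> (J - A) \<union> (J - B) \<union> {m'}"
      proof
        fix j assume j: "j \<in> J"
        have jp: "j \<noteq> p" using j J by auto
        consider "j < p" | "p < j" "j < m'" | "j = m'" | "m' < j" using jp by linarith
        then show "j \<in> (J - A) \<union> (J - B) \<union> {m'}"
        proof cases
          case 1 then show ?thesis using j N3[OF 1 m'A(2)] m'A(1) by blast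
        next
          case 2 then show ?thesis using j m'le by force
        next
          case 3 then show ?thesis by simp
        next
          case 4 then show ?thesis using j N1[OF 4 m'A(2) m'A(1)] by simp
        qed
      qed
      then show ?thesis by blast
    next
      case False
      have "J \<subseteq> (J - A) \<union> (J - B) \<union> {m}"
      proof
        fix j assume j: "j \<in> J"
        have jp: "j \<noteq> p" using j J by auto
        consider "j < m" | "j = m" | "m < j" "j < p" | "p < j" using jp by linarith
        then show "j \<in> (J - A) \<union> (J - B) \<union> {m}"
        proof cases
          case 1 then show ?thesis using j mle by force
        next
          case 2 then show ?thesis by simp
        next
          case 3 then show ?thesis using j N2[OF 3(1) 3(2) mA] by simp
        next
          case 4 then show ?thesis using j False by auto
        qed
      qed
      then show ?thesis by blast
    qed
  qed
  then obtain m0 where sub: "J \<subseteq> (J - A) \<union> (J - B) \<union> {m0}" by blast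
  have "card J \<le> card ((J - A) \<union> (J - B) \<union> {m0})" by (rule card_mono[OF _ sub]) (use J in auto)
  also have "\<dots> \<le> card (J - A) + card (J - B) + 1"
  proof -
    have "card ((J - A) \<union> (J - B) \<union> {m0}) \<le> card ((J - A) \<union> (J - B)) + card {m0}" by (rule card_Un_le)
    moreover have "card ((J - A) \<union> (J - B)) \<le> card (J - A) + card (J - B)" by (rule card_Un_le)
    ultimately show ?thesis by simp
  qed
  finally show False using cA cB cJ by linarith
qed



context MAIN begin

lemma hub: "z \<in> V \<Longrightarrow> z \<notin> T \<Longrightarrow> z \<notin> F \<Longrightarrow> \<exists>t\<in>T. E z t"
  by (auto simp: F_def)

lemma KEY:
  assumes p: "Suc p < length P" "p \<notin> Pos" and w: "P ! p \<notin> T" "P ! p \<notin> F"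
    and w': "P ! Suc p \<notin> T" "P ! Suc p \<notin> F"
  shows False
proof -
  have wV: "P ! p \<in> V" "P ! Suc p \<in> V" using p PV nth_mem by (auto dest!: subsetD[OF PV])
  obtain t where t: "t \<in> T" "E (P ! p) t" using hub[OF wV(1) w] by blast
  obtain t' where t': "t' \<in> T" "E (P ! Suc p) t'" using hub[OF wV(2) w'] by blast
  have wx: "\<not> E (P ! p) x" using p symE by (auto simp: Pos_def)
  have hA: "card (J - AA (P ! p)) + 2 \<le> k" using hubmiss[OF wV(1) w(1) t] wx by simp
  have hB: "card (J - AA (P ! Suc p)) + 1 \<le> k"
    using hubmiss[OF wV(2) w'(1) t'] by (simp split: if_splits)
  have pJ: "p \<notin> J" using p JPos by auto
  have AJ: "AA z \<subseteq> J" for z by (auto simp: AA_def)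
  have c: "2 * k \<le> card J + 1" using cardJ by simp
  have JE: "i \<in> J \<Longrightarrow> E x (P ! i) \<and> Suc i < length P" for i by (auto simp: J_def Pos_def)
  from COMB[OF finJ pJ AJ AJ hA hB c]
  show False
  proof (elim disjE exE conjE)
    fix a b assume ab: "a < b" "p < a" "a \<in> AA (P ! p)" "b \<in> AA (P ! Suc p)"
    show False
      by (rule X3[of p a b x]) (use ab JE[of a] JE[of b] xnP xV in \<open>auto simp: AA_def\<close>)
  next
    fix a b assume ab: "a < b" "b < p" "a \<in> AA (P ! p)" "b \<in> AA (P ! Suc p)"
    show False
      by (rule X4[of a b p x]) (use ab JE[of a] JE[of b] xnP xV p in \<open>auto simp: AA_def\<close>)
  next
    fix a b assume ab: "a < p" "p < b" "a \<in> AA (P ! Suc p)" "b \<in> AA (P ! p)"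
    show False
      by (rule X5[of a p b x]) (use ab JE[of a] JE[of b] xnP xV in \<open>auto simp: AA_def\<close>)
  qed
qed

lemma inT_pos: "q < length P \<Longrightarrow> P ! q \<in> T \<Longrightarrow> q \<ge> 1 \<and> q - 1 \<in> Pos"
proof -
  assume q: "q < length P" "P ! q \<in> T"
  have "P ! q \<noteq> x" using q xnP nth_mem by metis
  then obtain i where i: "i \<in> J" "P ! q = P ! Suc i" using q by (auto simp: T_def Xp_def)
  then have "q = Suc i" using q by (auto simp: J_def Pnth_inj)
  then show ?thesis using i by (auto simp: J_def)
qed

lemma ADJ: "z1 \<in> T \<union> F \<Longrightarrow> E z1 z2 \<Longrightarrow> z2 \<notin> F"
  using TF_ind by blast

lemma FW: "c \<in> Pos \<Longrightarrow> c + 2 * h + 1 < length P \<Longrightarrow> (\<forall>r. c < r \<and> r \<le> c + 2 * h + 1 \<longrightarrow> r \<notin> Pos)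
  \<Longrightarrow> P ! (c + 2 * h + 1) \<in> T \<union> F"
proof (induction h)
  case 0
  then have "c \<in> J" by (simp add: J_def)
  then show ?case by (auto simp: T_def Xp_def)
next
  case (Suc h)
  let ?q0 = "c + 2 * h + 1" and ?q1 = "c + 2 * h + 2" and ?q2 = "c + 2 * h + 3"
  have ih: "P ! ?q0 \<in> T \<union> F" using Suc by simp
  have q1T: "P ! ?q1 \<notin> T"
  proof
    assume "P ! ?q1 \<in> T"
    then have "?q1 - 1 \<in> Pos" using inT_pos[of ?q1] Suc.prems by simp
    then show False using Suc.prems(3) by (auto simp del: One_nat_def)
  qed
  have e: "E (P ! ?q0) (P ! ?q1)" using PE[of ?q0] Suc.prems by simp
  have q1F: "P ! ?q1 \<notin> F" using ADJ[OF ih e] .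
  have q2T: "P ! Suc ?q1 \<notin> T"
  proof
    assume "P ! Suc ?q1 \<in> T"
    then have "Suc ?q1 - 1 \<in> Pos" using inT_pos[of "Suc ?q1"] Suc.prems by simp
    then show False using Suc.prems(3) by (auto simp del: One_nat_def)
  qed
  have q1P: "?q1 \<notin> Pos" using Suc.prems(3) by simp
  show ?case
  proof (rule ccontr)
    assume "P ! (c + 2 * Suc h + 1) \<notin> T \<union> F"
    then have "P ! Suc ?q1 \<notin> F" by simp
    then show False using KEY[of ?q1] Suc.prems q1T q1F q2T q1P by simp
  qed
qed

lemma BW: "c \<in> Pos \<Longrightarrow> (\<forall>r < c. r \<notin> Pos) \<Longrightarrow> 2 * h + 1 \<le> c \<Longrightarrow> P ! (c - (2 * h + 1)) \<in> T \<union> F"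
proof (induction h)
  case 0
  let ?q = "c - 1"
  have cl: "c < length P" using 0 by (simp add: Pos_def)
  have qT: "P ! ?q \<notin> T"
  proof
    assume "P ! ?q \<in> T"
    then have "?q \<ge> 1 \<and> ?q - 1 \<in> Pos" using inT_pos[of ?q] cl by simp
    then show False using 0 by auto
  qed
  have cT: "P ! c \<notin> T"
  proof
    assume "P ! c \<in> T"
    then have "c - 1 \<in> Pos" using inT_pos[of c] cl by simp
    then show False using 0 by auto
  qed
  have cF: "P ! c \<notin> F"
  proof
    assume "P ! c \<in> F"
    moreover have "E (P ! c) x" using 0 symE by (simp add: Pos_def)
    ultimately show False by (auto simp: F_def T_def)
  qed
  have qP: "?q \<notin> Pos" using 0 by simp
  show ?case
  proof (rule ccontr)
    assume "P ! (c - (2 * 0 + 1)) \<notin> T \<union> F"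
    then have "P ! ?q \<notin> F" by simp
    moreover have "Suc ?q = c" using 0 by simp
    ultimately show False using KEY[of ?q] cl qT cT cF qP by simp
  qed
next
  case (Suc h)
  let ?q = "c - (2 * h + 3)"
  have cl: "c < length P" using Suc by (simp add: Pos_def)
  have ih: "P ! (Suc (Suc ?q)) \<in> T \<union> F"
  proof -
    have "c - (2 * h + 1) = Suc (Suc ?q)" using Suc.prems by simp
    then show ?thesis using Suc by simp
  qed
  have q1T: "P ! Suc ?q \<notin> T"
  proof
    assume "P ! Suc ?q \<in> T"
    moreover have "Suc ?q < length P" using cl Suc.prems by simp
    ultimately have "?q \<in> Pos" using inT_pos[of "Suc ?q"] by simp
    then show False using Suc.prems by auto
  qed
  have e: "E (P ! Suc ?q) (P ! Suc (Suc ?q))" using PE[of "Suc ?q"] Suc.prems cl by simp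
  have q1F: "P ! Suc ?q \<notin> F" using ADJ[OF ih symE[OF e]] .
  have qT: "P ! ?q \<notin> T"
  proof
    assume "P ! ?q \<in> T"
    then have "?q \<ge> 1 \<and> ?q - 1 \<in> Pos" using inT_pos[of ?q] cl by simp
    then show False using Suc.prems by auto
  qed
  have qP: "?q \<notin> Pos" using Suc.prems by simp
  show ?case
  proof (rule ccontr)
    assume a: "P ! (c - (2 * Suc h + 1)) \<notin> T \<union> F"
    have eqq: "c - (2 * Suc h + 1) = ?q" by simp
    have "P ! ?q \<notin> T \<union> F" using a unfolding eqq .
    then have "P ! ?q \<notin> F" by blast
    moreover have sl: "Suc ?q < length P" using cl Suc.prems by simp
    ultimately show False using KEY[of ?q] qT q1T q1F qP by blast
  qed
qed

end


context MAIN begin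

abbreviation "LL \<equiv> nbr_pos E P x"
abbreviation "tt \<equiv> length (nbr_pos E P x)"

lemma LL_def': "LL = sorted_list_of_set Pos" by (simp add: nbr_pos_def Pos_def)
lemma LL_set: "set LL = Pos" using finPos by (simp add: LL_def')
lemma LL_len: "tt = card Pos" by (simp add: LL_def')
lemma LL_sorted: "sorted_wrt (<) LL"
  unfolding LL_def' by (simp add: strict_sorted_iff)
lemma LL_mono: "l1 < l2 \<Longrightarrow> l2 < tt \<Longrightarrow> LL ! l1 < LL ! l2"
  using sorted_wrt_nth_less[OF LL_sorted] by blast
lemma LL_mono': "l1 \<le> l2 \<Longrightarrow> l2 < tt \<Longrightarrow> LL ! l1 \<le> LL ! l2"
  using LL_mono by (metis le_eq_less_or_eq order.strict_implies_order)
lemma LL_Pos: "l < tt \<Longrightarrow> LL ! l \<in> Pos" using LL_set nth_mem by blast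
lemma Pos_LL: "r \<in> Pos \<Longrightarrow> \<exists>m < tt. LL ! m = r" using LL_set by (metis in_set_conv_nth)

lemma gap: "Suc l < tt \<Longrightarrow> LL ! l < r \<Longrightarrow> r < LL ! Suc l \<Longrightarrow> r \<notin> Pos"
proof
  assume a: "Suc l < tt" "LL ! l < r" "r < LL ! Suc l" "r \<in> Pos"
  obtain m where m: "m < tt" "LL ! m = r" using Pos_LL[OF a(4)] by blast
  show False
  proof (cases "m \<le> l")
    case True then show ?thesis using LL_mono'[of m l] a m by simp
  next
    case False then show ?thesis using LL_mono'[of "Suc l" m] a m by simp
  qed
qed

lemma after: "0 < tt \<Longrightarrow> LL ! (tt - 1) < r \<Longrightarrow> r \<notin> Pos"
proof
  assume a: "0 < tt" "LL ! (tt - 1) < r" "r \<in> Pos"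
  obtain m where m: "m < tt" "LL ! m = r" using Pos_LL[OF a(3)] by blast
  moreover have "m \<le> tt - 1" using m by simp
  moreover have "tt - 1 < tt" using a by simp
  ultimately have "LL ! m \<le> LL ! (tt - 1)" using LL_mono' by blast
  then show False using a m by simp
qed

lemma before: "0 < tt \<Longrightarrow> r < LL ! 0 \<Longrightarrow> r \<notin> Pos"
proof
  assume a: "0 < tt" "r < LL ! 0" "r \<in> Pos"
  obtain m where m: "m < tt" "LL ! m = r" using Pos_LL[OF a(3)] by blast
  then show False using LL_mono'[of 0 m] a by simp
qed

lemma tt2: "tt \<ge> 2" using deg k1 LL_len by simp
lemma LLne: "LL \<noteq> []" using tt2 by (metis list.size(3) not_numeral_le_zero)

lemma card_im: "card {P ! j | j. Q j} \<le> card {j. Q j}" if "finite {j. Q j}" for Q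
proof -
  have "{P ! j | j. Q j} = (\<lambda>j. P ! j) ` {j. Q j}" by auto
  then show ?thesis using card_image_le[OF that] by simp
qed

lemma seg0: "z \<in> seg' E P x 0 \<Longrightarrow> z \<in> T \<union> F"
proof -
  assume "z \<in> seg' E P x 0"
  then obtain j where j: "z = P ! (xpos E P x 1 - j)" "1 \<le> j" "j \<le> card (seg E P x 0)" "odd j"
    by (auto simp: seg'_def)
  have xp: "xpos E P x 1 = LL ! 0" by (simp add: xpos_def)
  have "card (seg E P x 0) \<le> LL ! 0"
    using card_im[of "\<lambda>j. j < LL ! 0"] by (simp add: seg_def xpos_def)
  then have jc: "j \<le> LL ! 0" using j by simp
  obtain h where h: "j = 2 * h + 1" using j(4) oddE by blast
  have "P ! (LL ! 0 - (2 * h + 1)) \<in> T \<union> F"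
    by (rule BW) (use LL_Pos[of 0] LLne before jc h in auto)
  then show ?thesis using j(1) xp h by simp
qed

lemma segi: "1 \<le> i \<Longrightarrow> i \<le> tt \<Longrightarrow> z \<in> seg' E P x i \<Longrightarrow> z \<in> T \<union> F"
proof -
  assume i: "1 \<le> i" "i \<le> tt" "z \<in> seg' E P x i"
  then obtain j where j: "z = P ! (xpos E P x i + j)" "1 \<le> j" "j \<le> card (seg E P x i)" "odd j"
    by (auto simp: seg'_def)
  define c where "c = LL ! (i - 1)"
  have xp: "xpos E P x i = c" by (simp add: xpos_def c_def)
  have cP: "c \<in> Pos" using LL_Pos[of "i - 1"] i by (simp add: c_def)
  obtain h where h: "j = 2 * h + 1" using j(4) oddE by blast
  have rng: "c + j < length P \<and> (\<forall>r. c < r \<and> r \<le> c + j \<longrightarrow> r \<notin> Pos)"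
  proof (cases "i < tt")
    case True
    have xp2: "xpos E P x (Suc i) = LL ! i" by (simp add: xpos_def)
    have "seg E P x i = {P ! j | j. c < j \<and> j < LL ! i}"
      using True i by (simp add: seg_def xp xp2 Let_def)
    then have "card (seg E P x i) \<le> card {j. c < j \<and> j < LL ! i}"
      using card_im[of "\<lambda>j. c < j \<and> j < LL ! i"] by simp
    also have "{j. c < j \<and> j < LL ! i} = {c<..<LL ! i}" by auto
    finally have "j \<le> LL ! i - Suc c" using j by simp
    moreover have "LL ! i < length P" using LL_Pos[of i] True by (simp add: Pos_def)
    moreover have "c < LL ! i" using LL_mono[of "i - 1" i] True i by (simp add: c_def)
    moreover have "\<forall>r. c < r \<and> r < LL ! i \<longrightarrow> r \<notin> Pos"
      using gap[of "i - 1"] True i by (simp add: c_def)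
    ultimately show ?thesis by auto
  next
    case False
    then have it: "i = tt" using i by simp
    have xpt: "xpos E P x tt = c" using it xp by simp
    have "seg E P x i = {P ! j | j. c < j \<and> j < length P}"
      using False i it LLne by (simp add: seg_def xpt Let_def)
    then have "card (seg E P x i) \<le> card {j. c < j \<and> j < length P}"
      using card_im[of "\<lambda>j. c < j \<and> j < length P"] by simp
    also have "{j. c < j \<and> j < length P} = {c<..<length P}" by auto
    finally have "j \<le> length P - Suc c" using j by simp
    moreover have "\<forall>r. c < r \<longrightarrow> r \<notin> Pos"
      using after LLne it by (simp add: c_def)
    moreover have "c < length P" using cP by (simp add: Pos_def)
    ultimately show ?thesis using j(2) by auto
  qed
  have "P ! (c + 2 * h + 1) \<in> T \<union> F"
    by (rule FW[OF cP]) (use rng h in auto)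
  then show ?thesis using j(1) xp h by (simp add: add.assoc)
qed

lemma Sprime_TF: "z \<in> Sprime E P x \<Longrightarrow> z \<in> T \<union> F"
proof -
  assume z: "z \<in> Sprime E P x"
  have "tt \<noteq> 0" using tt2 by linarith
  then obtain i where i: "i \<in> {0..tt}" "z \<in> seg' E P x i" using z by (auto simp: Sprime_def Let_def)
  show ?thesis
  proof (cases "i = 0")
    case True then show ?thesis using seg0 i by simp
  next
    case False then show ?thesis using segi[of i z] i by simp
  qed
qed

lemma HH_TF: "y \<in> HH \<Longrightarrow> y \<in> T \<union> F"
  using H_F by (cases "y = x") (auto simp: T_def)

lemma final:
  "independent V E (Sprime E P x)
    \<and> (\<forall>y\<in>V - set P. \<forall>z\<in>Sprime E P x. \<not> E y z)
    \<and> independent V E ((V - set P) \<union> Sprime E P x)"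
  unfolding independent_def
  using Sprime_TF HH_TF TF_ind TF_V by blast

end


theorem mainTheorem8:
  fixes V :: "'a set" and E :: "'a \<Rightarrow> 'a \<Rightarrow> bool" and k :: nat
    and u v x :: 'a and P :: "'a list"
  assumes "simple_graph V E"
    and "k \<ge> 1"
    and "k_connected V E (2 * k)"
    and "H_free (P2kP1_V k) P2kP1_E V E"
    and "u \<in> V" and "v \<in> V" and "u \<noteq> v"
    and "longest_uv_path V E u v P"
    and "set P \<noteq> V"
    and "x \<in> V - set P"
  shows "independent V E (Sprime E P x)
    \<and> (\<forall>y\<in>V - set P. \<forall>z\<in>Sprime E P x. \<not> E y z)
    \<and> independent V E ((V - set P) \<union> Sprime E P x)"
proof -
  interpret MAIN V E u v P k x
    by unfold_locales (use assms in auto)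
  show ?thesis by (rule final)
qed

end
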